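(* For finite $n$, if the Malthusian exponent $\Xi$ exists, then $\Xi<\lambda_{2,\max}^{-1}$.
   Context: $\sigma_1^2\ge\dots\ge\sigma_n^2\ge0$ are the eigenvalues of $\boldsymbol A\boldsymbol A^T$ for $\boldsymbol A\in\mathbb R^{n\times d}$; $\gamma>0$, $\zeta\in(0,1)$, $\Delta\in[0,1)$. For $j\in[n]$: $\Omega_j=1-\gamma\zeta\sigma_j^2+\Delta$, $\lambda_{2,j},\lambda_{3,j}=\frac{-2\Delta+\Omega_j^2\pm\sqrt{\Omega_j^2(\Omega_j^2-4\Delta)}}{2}$ (complex root if needed); $\lambda_{2,\max}=\max\{|\lambda_{2,j}|:\sigma_j^2>0\}$. $H_2(t)=\frac1n\sum_j\frac{2\sigma_j^4}{\Omega_j^2-4\Delta}\big(-\Delta^{t+1}+\frac12\lambda_{2,j}^{t+1}+\frac12\lambda_{3,j}^{t+1}\big)$ (by continuity when $\Omega_j^2=4\Delta$). The Malthusian exponent $\Xi$ is the unique solution of $\gamma^2\zeta(1-\zeta)\sum_{t=0}^\infty\Xi^tH_2(t)=1$, when such a solution exists. *)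

theory Defs
  imports "HOL-Analysis.Analysis"
begin

text \<open>Throughout, \<open>s\<close> stands for an eigenvalue \<open>\<sigma>_j^2\<close> of \<open>A A^T\<close>.\<close>

definition Omega :: "real \<Rightarrow> real \<Rightarrow> real \<Rightarrow> real \<Rightarrow> real" where
  "Omega \<gamma> \<zeta> \<Delta> s = 1 - \<gamma> * \<zeta> * s + \<Delta>"

definition lam2 :: "real \<Rightarrow> real \<Rightarrow> real \<Rightarrow> real \<Rightarrow> complex" where
  "lam2 \<gamma> \<zeta> \<Delta> s =
     (let \<Omega> = Omega \<gamma> \<zeta> \<Delta> s in
      (complex_of_real (- 2 * \<Delta> + \<Omega>^2) + csqrt (complex_of_real (\<Omega>^2 * (\<Omega>^2 - 4 * \<Delta>)))) / 2)"

definition lam3 :: "real \<Rightarrow> real \<Rightarrow> real \<Rightarrow> real \<Rightarrow> complex" where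
  "lam3 \<gamma> \<zeta> \<Delta> s =
     (let \<Omega> = Omega \<gamma> \<zeta> \<Delta> s in
      (complex_of_real (- 2 * \<Delta> + \<Omega>^2) - csqrt (complex_of_real (\<Omega>^2 * (\<Omega>^2 - 4 * \<Delta>)))) / 2)"

text \<open>When \<open>\<Omega>^2 = 4\<Delta>\<close>
  the value is the continuous extension, which equals \<open>\<sigma>^4 (t+1)^2 \<Delta>^t\<close>.
  The expression is real (conjugate roots); we take the real part of the complex value.\<close>
definition H2_term :: "real \<Rightarrow> real \<Rightarrow> real \<Rightarrow> real \<Rightarrow> nat \<Rightarrow> real" where
  "H2_term \<gamma> \<zeta> \<Delta> s t =
     (let \<Omega> = Omega \<gamma> \<zeta> \<Delta> s in
      if \<Omega>^2 = 4 * \<Delta> then s^2 * (real t + 1)^2 * \<Delta>^t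
      else Re (complex_of_real (2 * s^2 / (\<Omega>^2 - 4 * \<Delta>)) *
               (- complex_of_real (\<Delta>^(t+1)) + lam2 \<gamma> \<zeta> \<Delta> s ^ (t+1) / 2
                  + lam3 \<gamma> \<zeta> \<Delta> s ^ (t+1) / 2)))"

definition H2 :: "nat \<Rightarrow> (nat \<Rightarrow> real) \<Rightarrow> real \<Rightarrow> real \<Rightarrow> real \<Rightarrow> nat \<Rightarrow> real" where
  "H2 n \<sigma>2 \<gamma> \<zeta> \<Delta> t = (1 / real n) * (\<Sum>j<n. H2_term \<gamma> \<zeta> \<Delta> (\<sigma>2 j) t)"

definition lam2_max :: "nat \<Rightarrow> (nat \<Rightarrow> real) \<Rightarrow> real \<Rightarrow> real \<Rightarrow> real \<Rightarrow> real" where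
  "lam2_max n \<sigma>2 \<gamma> \<zeta> \<Delta> = Max {cmod (lam2 \<gamma> \<zeta> \<Delta> (\<sigma>2 j)) | j. j < n \<and> \<sigma>2 j > 0}"

definition malthusian_eq :: "nat \<Rightarrow> (nat \<Rightarrow> real) \<Rightarrow> real \<Rightarrow> real \<Rightarrow> real \<Rightarrow> real \<Rightarrow> bool" where
  "malthusian_eq n \<sigma>2 \<gamma> \<zeta> \<Delta> x \<longleftrightarrow>
     summable (\<lambda>t. x^t * H2 n \<sigma>2 \<gamma> \<zeta> \<Delta> t) \<and>
     \<gamma>^2 * \<zeta> * (1 - \<zeta>) * (\<Sum>t. x^t * H2 n \<sigma>2 \<gamma> \<zeta> \<Delta> t) = 1"

definition malthusian_exponent :: "nat \<Rightarrow> (nat \<Rightarrow> real) \<Rightarrow> real \<Rightarrow> real \<Rightarrow> real \<Rightarrow> real \<Rightarrow> bool" where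
  "malthusian_exponent n \<sigma>2 \<gamma> \<zeta> \<Delta> \<Xi> \<longleftrightarrow>
     \<Xi> > 0 \<and> malthusian_eq n \<sigma>2 \<gamma> \<zeta> \<Delta> \<Xi> \<and>
     (\<forall>x>0. malthusian_eq n \<sigma>2 \<gamma> \<zeta> \<Delta> x \<longrightarrow> x = \<Xi>)"

end

theory Submission imports Defs begin


lemma algA:
  fixes m1 m2 S :: complex and t :: nat
  assumes "m1 \<noteq> m2"
  shows "(2 * S / (m1 - m2)^2) * (- ((m1*m2)^(t+1)) + (m1^2)^(t+1)/2 + (m2^2)^(t+1)/2)
         = S * ((m1^(t+1) - m2^(t+1)) / (m1 - m2))^2"
proof -
  have d: "m1 - m2 \<noteq> 0" using assms by simp
  define p where "p = m1^(t+1)"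
  define q where "q = m2^(t+1)"
  have e: "(m1*m2)^(t+1) = p*q" "(m1^2)^(t+1) = p^2" "(m2^2)^(t+1) = q^2"
    by (simp_all add: p_def q_def power_mult_distrib flip: power_mult) (simp_all add: mult.commute)
  have f: "- (p*q) + p^2/2 + q^2/2 = (p-q)^2/2" by (simp add: power2_eq_square field_simps)
  show ?thesis unfolding e p_def[symmetric] q_def[symmetric] f using d
    by (simp add: power_divide)
qed

lemma rec_id:
  fixes m1 m2 :: complex
  shows "m1^(t+3) - m2^(t+3) = (m1+m2)*(m1^(t+2)-m2^(t+2)) - m1*m2*(m1^(t+1)-m2^(t+1))"
  by (simp add: algebra_simps power_Suc numeral_3_eq_3 numeral_2_eq_2)

lemma divhelp: fixes a b c e d :: complex shows "(a*b - c*e)/d = a*(b/d) - c*(e/d)"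
  by (simp add: diff_divide_distrib)

fun useq :: "real \<Rightarrow> real \<Rightarrow> nat \<Rightarrow> real" where
  "useq w D 0 = 1"
| "useq w D (Suc 0) = w"
| "useq w D (Suc (Suc t)) = w * useq w D (Suc t) - D * useq w D t"

lemma U_eq:
  fixes m1 m2 :: complex
  assumes "m1 \<noteq> m2" "m1 + m2 = of_real w" "m1 * m2 = of_real D"
  shows "(m1^(t+1) - m2^(t+1)) / (m1 - m2) = of_real (useq w D t)"
proof -
  have d: "m1 - m2 \<noteq> 0" using assms by simp
  have "(m1^(t+1) - m2^(t+1)) / (m1 - m2) = of_real (useq w D t) \<and>
        (m1^(t+2) - m2^(t+2)) / (m1 - m2) = of_real (useq w D (Suc t))"
  proof (induction t)
    case 0
    have "m1^2 - m2^2 = (m1+m2)*(m1-m2)" by (simp add: algebra_simps power2_eq_square)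
    then have "(m1^2 - m2^2)/(m1-m2) = of_real w" using d assms by simp
    then show ?case using d assms by (simp add: power2_eq_square)
  next
    case (Suc t)
    have "(m1^(t+3) - m2^(t+3)) / (m1 - m2) = (m1+m2)*((m1^(t+2)-m2^(t+2))/(m1-m2)) - m1*m2*((m1^(t+1)-m2^(t+1))/(m1-m2))"
      unfolding rec_id by (rule divhelp)
    also have "\<dots> = of_real (useq w D (Suc (Suc t)))" using Suc assms by simp
    finally show ?case using Suc by (simp add: numeral_3_eq_3 numeral_2_eq_2)
  qed
  then show ?thesis by simp
qed



lemma cmod_cmp:
  fixes w D :: real
  assumes "0 \<le> D"
  shows "cmod ((complex_of_real (-2*D + w^2) - csqrt (complex_of_real (w^2*(w^2-4*D))))/2)
       \<le> cmod ((complex_of_real (-2*D + w^2) + csqrt (complex_of_real (w^2*(w^2-4*D))))/2)"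
proof (cases "w^2*(w^2-4*D) \<ge> 0")
  case T: True
  define r where "r = sqrt (w^2*(w^2-4*D))"
  have X: "csqrt (complex_of_real (w^2*(w^2-4*D))) = of_real r" unfolding r_def by (rule csqrt_of_real[OF T])
  have r0: "r \<ge> 0" unfolding r_def using T by (rule real_sqrt_ge_zero)
  have "\<bar>-2*D + w^2 - r\<bar> \<le> \<bar>-2*D + w^2 + r\<bar>"
  proof (cases "w = 0")
    case True then have "r = 0" using r_def by simp
    then show ?thesis by simp
  next
    case False
    then have "w^2 > 0" by simp
    then have "w^2 - 4*D \<ge> 0" using T by (simp add: zero_le_mult_iff)
    then show ?thesis using r0 assms by linarith
  qed
  moreover have "cmod ((complex_of_real (-2*D + w^2) - of_real r)/2) = \<bar>-2*D + w^2 - r\<bar>/2"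
    by (simp only: of_real_diff[symmetric] norm_divide norm_of_real) simp
  moreover have "cmod ((complex_of_real (-2*D + w^2) + of_real r)/2) = \<bar>-2*D + w^2 + r\<bar>/2"
    by (simp only: of_real_add[symmetric] norm_divide norm_of_real) simp
  ultimately show ?thesis unfolding X by simp
next
  case False
  define r where "r = sqrt \<bar>w^2*(w^2-4*D)\<bar>"
  have X: "csqrt (complex_of_real (w^2*(w^2-4*D))) = \<i> * of_real r" using False r_def by simp
  show ?thesis unfolding X by (simp add: cmod_def)
qed

lemma roots_exist:
  fixes w D :: real
  assumes "w^2 \<noteq> 4*D" "0 \<le> D"
  shows "\<exists>m1 m2. m1 \<noteq> m2 \<and> m1 + m2 = of_real w \<and> m1*m2 = of_real D \<and>
     (complex_of_real (-2*D + w^2) + csqrt (complex_of_real (w^2*(w^2-4*D))))/2 = m1^2 \<and>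
     (complex_of_real (-2*D + w^2) - csqrt (complex_of_real (w^2*(w^2-4*D))))/2 = m2^2"
proof (cases "w = 0")
  case True
  then have D: "D > 0" using assms by simp
  define m1 where "m1 = \<i> * of_real (sqrt D)"
  have s: "(complex_of_real (sqrt D))^2 = of_real D" using D
    by (metis less_eq_real_def of_real_power real_sqrt_pow2)
  have "m1 \<noteq> - m1" using D m1_def by simp
  moreover have "m1 * (-m1) = of_real D" using s unfolding m1_def by (simp add: power2_eq_square algebra_simps)
  moreover have "m1^2 = - of_real D" using s unfolding m1_def by (simp add: power_mult_distrib)
  ultimately show ?thesis using True
    by (intro exI[of _ m1] exI[of _ "-m1"]) simp
next
  case False
  define X where "X = csqrt (complex_of_real (w^2*(w^2-4*D)))"
  have X2: "X^2 = of_real (w^2*(w^2-4*D))" unfolding X_def by simp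
  define W where "W = complex_of_real w"
  have W0: "W \<noteq> 0" using False W_def by simp
  define m1 where "m1 = (W + X/W)/2"
  define m2 where "m2 = (W - X/W)/2"
  have X2': "X^2 = W^2 * (W^2 - 4 * of_real D)" unfolding X2 W_def by simp
  have sum: "m1 + m2 = W" unfolding m1_def m2_def by (simp add: field_simps)
  have prod: "m1 * m2 = of_real D"
  proof -
    have "m1 * m2 = (W^2 - X^2/W^2)/4" unfolding m1_def m2_def
      by (simp add: field_simps power2_eq_square)
    also have "\<dots> = of_real D" unfolding X2' using W0 by (simp add: field_simps power2_eq_square)
    finally show ?thesis .
  qed
  have sq1: "m1^2 = (of_real (-2*D + w^2) + X)/2"
  proof -
    have "m1^2 = (W^2 + 2*X + X^2/W^2)/4" unfolding m1_def using W0
      by (simp add: field_simps power2_eq_square)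
    also have "\<dots> = (of_real (-2*D + w^2) + X)/2" unfolding X2' using W0 unfolding W_def
      by (simp add: field_simps power2_eq_square)
    finally show ?thesis .
  qed
  have sq2: "m2^2 = (of_real (-2*D + w^2) - X)/2"
  proof -
    have "m2^2 = (W^2 - 2*X + X^2/W^2)/4" unfolding m2_def using W0
      by (simp add: field_simps power2_eq_square)
    also have "\<dots> = (of_real (-2*D + w^2) - X)/2" unfolding X2' using W0 unfolding W_def
      by (simp add: field_simps power2_eq_square)
    finally show ?thesis .
  qed
  have ne: "m1 \<noteq> m2"
  proof
    assume "m1 = m2"
    then have "(m1 - m2)^2 = 0" by simp
    moreover have "(m1 - m2)^2 = (m1+m2)^2 - 4*(m1*m2)" by (simp add: power2_eq_square algebra_simps)
    ultimately have "W^2 - 4 * of_real D = 0" using sum prod by simp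
    then have "complex_of_real (w^2 - 4*D) = 0" unfolding W_def by simp
    then show False using assms(1) by (simp only: of_real_eq_0_iff)
  qed
  show ?thesis using ne sum prod sq1 sq2 unfolding X_def W_def
    by (intro exI[of _ m1] exI[of _ m2]) simp
qed


lemma lam2_unf: "lam2 g z D s = (complex_of_real (-2*D + (Omega g z D s)^2) + csqrt (complex_of_real ((Omega g z D s)^2*((Omega g z D s)^2-4*D))))/2"
  unfolding lam2_def Let_def by simp
lemma lam3_unf: "lam3 g z D s = (complex_of_real (-2*D + (Omega g z D s)^2) - csqrt (complex_of_real ((Omega g z D s)^2*((Omega g z D s)^2-4*D))))/2"
  unfolding lam3_def Let_def by simp

lemma H2_term_roots:
  assumes "0 \<le> D" "(Omega g z D s)^2 \<noteq> 4*D"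
  shows "\<exists>m1 m2. m1 \<noteq> m2 \<and> lam2 g z D s = m1^2 \<and> lam3 g z D s = m2^2 \<and>
     m1 + m2 = of_real (Omega g z D s) \<and> m1*m2 = of_real D \<and> cmod m2 \<le> cmod m1 \<and>
     (\<forall>t. H2_term g z D s t = s^2 * (useq (Omega g z D s) D t)^2)"
proof -
  define w where "w = Omega g z D s"
  obtain m1 m2 where m: "m1 \<noteq> m2" "m1 + m2 = of_real w" "m1*m2 = of_real D"
    "(complex_of_real (-2*D + w^2) + csqrt (complex_of_real (w^2*(w^2-4*D))))/2 = m1^2"
    "(complex_of_real (-2*D + w^2) - csqrt (complex_of_real (w^2*(w^2-4*D))))/2 = m2^2"
    using roots_exist[of w D] assms unfolding w_def by blast
  have l2: "lam2 g z D s = m1^2" using m(4) unfolding lam2_unf w_def by simp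
  have l3: "lam3 g z D s = m2^2" using m(5) unfolding lam3_unf w_def by simp
  have "cmod (m2^2) \<le> cmod (m1^2)" using cmod_cmp[of D w] assms m(4,5) by simp
  then have "cmod m2 ^2 \<le> cmod m1 ^2" by (simp add: norm_power)
  then have cm: "cmod m2 \<le> cmod m1" by (rule power2_le_imp_le) simp
  have dd: "(m1 - m2)^2 = of_real (w^2 - 4*D)"
  proof -
    have "(m1 - m2)^2 = (m1+m2)^2 - 4*(m1*m2)" by (simp add: power2_eq_square algebra_simps)
    then show ?thesis using m(2,3) by simp
  qed
  have H: "H2_term g z D s t = s^2 * (useq w D t)^2" for t
  proof -
    have "H2_term g z D s t = Re (complex_of_real (2 * s^2 / (w^2 - 4 * D)) *
               (- complex_of_real (D^(t+1)) + lam2 g z D s ^ (t+1) / 2 + lam3 g z D s ^ (t+1) / 2))"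
      unfolding H2_term_def Let_def w_def using assms(2) by simp
    also have "complex_of_real (2 * s^2 / (w^2 - 4 * D)) = 2 * of_real (s^2) / (m1 - m2)^2"
      unfolding dd by simp
    also have "complex_of_real (D^(t+1)) = (m1*m2)^(t+1)" using m(3) by simp
    also have "2 * complex_of_real (s^2) / (m1 - m2)^2 * (- ((m1*m2)^(t+1)) + lam2 g z D s ^ (t+1) / 2 + lam3 g z D s ^ (t+1) / 2)
       = of_real (s^2) * ((m1^(t+1) - m2^(t+1)) / (m1 - m2))^2"
      unfolding l2 l3 using algA[OF m(1)] by simp
    also have "\<dots> = of_real (s^2 * (useq w D t)^2)" using U_eq[OF m(1,2,3)] by simp
    finally show ?thesis by (simp only: Re_complex_of_real)
  qed
  show ?thesis using m(1,2,3) l2 l3 cm H unfolding w_def by blast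
qed

lemma H2_term_nonneg:
  assumes "0 \<le> D" shows "0 \<le> H2_term g z D s t"
proof (cases "(Omega g z D s)^2 = 4*D")
  case True
  then show ?thesis unfolding H2_term_def Let_def using assms by simp
next
  case False
  then show ?thesis using H2_term_roots[OF assms False] by auto
qed

lemma H2_term_zero_s: "H2_term g z D 0 t = 0"
  unfolding H2_term_def Let_def by simp

lemma lam2_double:
  assumes "(Omega g z D s)^2 = 4*D"
  shows "lam2 g z D s = of_real D"
  unfolding lam2_unf using assms by simp

lemma lam2_zero:
  assumes "0 \<le> D" "lam2 g z D s = 0" "t \<ge> 1"
  shows "H2_term g z D s t = 0"
proof (cases "(Omega g z D s)^2 = 4*D")
  case True
  then have "D = 0" using lam2_double[OF True] assms by simp
  then show ?thesis unfolding H2_term_def Let_def using True assms(3) by simp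
next
  case False
  then obtain m1 m2 where "m1 \<noteq> m2" "lam2 g z D s = m1^2" "cmod m2 \<le> cmod m1"
    using H2_term_roots[OF assms(1) False] by blast
  then show ?thesis using assms(2) by simp
qed

lemma divhelp2: fixes a c e d :: complex shows "(a - c*e)/d = a/d - c*(e/d)"
  by (simp add: diff_divide_distrib)

lemma step_id:
  fixes m1 m2 :: complex
  assumes "m1 \<noteq> m2"
  shows "(m1^(t+2) - m2^(t+2))/(m1-m2) - m2*((m1^(t+1)-m2^(t+1))/(m1-m2)) = m1^(t+1)"
proof -
  have d: "m1 - m2 \<noteq> 0" using assms by simp
  have "m1^(t+2) - m2^(t+2) - m2*(m1^(t+1)-m2^(t+1)) = m1^(t+1) * (m1 - m2)"
    by (simp add: algebra_simps power_Suc numeral_2_eq_2)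
  have "(m1^(t+2) - m2^(t+2))/(m1-m2) - m2*((m1^(t+1)-m2^(t+1))/(m1-m2))
     = (m1^(t+2) - m2^(t+2) - m2*(m1^(t+1)-m2^(t+1)))/(m1-m2)"
    by (rule divhelp2[symmetric])
  also have "\<dots> = m1^(t+1)" unfolding \<open>m1^(t+2) - m2^(t+2) - m2*(m1^(t+1)-m2^(t+1)) = m1^(t+1) * (m1 - m2)\<close>
    using d by simp
  finally show ?thesis .
qed

lemma no_tendsto:
  assumes D: "0 \<le> D" and s: "s > 0" and X: "Xi > 0" and L: "Xi * cmod (lam2 g z D s) \<ge> 1"
  shows "\<not> ((\<lambda>t. Xi^t * H2_term g z D s t) \<longlonglongrightarrow> 0)"
proof
  assume lim: "(\<lambda>t. Xi^t * H2_term g z D s t) \<longlonglongrightarrow> 0"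
  show False
  proof (cases "(Omega g z D s)^2 = 4*D")
    case True
    have l: "cmod (lam2 g z D s) = D" using lam2_double[OF True] D by simp
    have "s^2 \<le> Xi^t * H2_term g z D s t" for t
    proof -
      have h: "H2_term g z D s t = s^2 * (real t + 1)^2 * D^t"
        unfolding H2_term_def Let_def using True by simp
      have "1 \<le> (Xi*D)^t" using L l by (simp add: one_le_power)
      moreover have "1 \<le> (real t + 1)^2" by simp
      ultimately have "1 \<le> (real t + 1)^2 * (Xi*D)^t"
        by (metis mult_mono' mult_1 zero_le_one)
      then have "s^2 * 1 \<le> s^2 * ((real t + 1)^2 * (Xi*D)^t)"
        by (rule mult_left_mono) simp
      then show ?thesis unfolding h by (simp add: power_mult_distrib algebra_simps)
    qed
    then have "s^2 \<le> 0" using LIMSEQ_le_const[OF lim] by blast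
    then show False using s by simp
  next
    case False
    obtain m1 m2 where m: "m1 \<noteq> m2" "lam2 g z D s = m1^2"
      "m1 + m2 = of_real (Omega g z D s)" "m1*m2 = of_real D" "cmod m2 \<le> cmod m1"
      "\<And>t. H2_term g z D s t = s^2 * (useq (Omega g z D s) D t)^2"
      using H2_term_roots[OF D False] by blast
    define u where "u = useq (Omega g z D s) D"
    define r where "r = cmod m1"
    have r0: "r \<ge> 0" unfolding r_def by simp
    have Lr: "Xi * r^2 \<ge> 1" using L m(2) unfolding r_def by (simp add: norm_power)
    define f where "f t = Xi^t * H2_term g z D s t" for t
    have f: "f t = s^2 * (Xi^t * (u t)^2)" for t unfolding f_def m(6) u_def by simp
    have key: "s^2 / 2 \<le> f (Suc t) + (Xi * r^2) * f t" for t
    proof -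
      have e1: "of_real (u t) = (m1^(t+1)-m2^(t+1))/(m1-m2)"
        using U_eq[OF m(1,3,4), of t] unfolding u_def by simp
      have e2: "of_real (u (t+1)) = (m1^(t+2)-m2^(t+2))/(m1-m2)"
        using U_eq[OF m(1,3,4), of "t+1"] unfolding u_def by (simp add: numeral_2_eq_2)
      have e: "of_real (u (t+1)) - m2 * of_real (u t) = m1^(t+1)"
        unfolding e1 e2 by (rule step_id[OF m(1)])
      have "r^(t+1) = cmod (of_real (u (t+1)) - m2 * of_real (u t))"
        unfolding e r_def by (simp only: norm_power)
      also have "\<dots> \<le> \<bar>u (t+1)\<bar> + cmod m2 * \<bar>u t\<bar>"
        by (metis norm_triangle_ineq4 norm_mult norm_of_real)
      also have "\<dots> \<le> \<bar>u (t+1)\<bar> + r * \<bar>u t\<bar>"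
        using m(5) unfolding r_def by (simp add: mult_right_mono)
      finally have a: "r^(t+1) \<le> \<bar>u (t+1)\<bar> + r * \<bar>u t\<bar>" .
      have "(r^(t+1))^2 \<le> (\<bar>u (t+1)\<bar> + r * \<bar>u t\<bar>)^2"
        using a r0 by (simp add: power_mono)
      also have "\<dots> \<le> 2 * (u (t+1))^2 + 2 * r^2 * (u t)^2"
      proof -
        have "0 \<le> (\<bar>u (t+1)\<bar> - r * \<bar>u t\<bar>)^2" by simp
        then show ?thesis by (simp add: power2_eq_square algebra_simps)
      qed
      finally have b0: "(r^(t+1))^2 \<le> 2 * (u (t+1))^2 + 2 * r^2 * (u t)^2" .
      have "(r^2)^(t+1) = (r^(t+1))^2" by (metis power_mult mult.commute)
      with b0 have b: "(r^2)^(t+1) \<le> 2 * (u (t+1))^2 + 2 * r^2 * (u t)^2" by simp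
      have c: "1 \<le> (Xi * r^2)^(t+1)" using Lr by (rule one_le_power)
      have "(Xi * r^2)^(t+1) = Xi^(t+1) * (r^2)^(t+1)" by (simp add: power_mult_distrib)
      also have "\<dots> \<le> Xi^(t+1) * (2 * (u (t+1))^2 + 2 * r^2 * (u t)^2)"
        using b X by (simp add: mult_left_mono)
      finally have "1 \<le> 2 * (Xi^(t+1) * (u (t+1))^2) + 2 * (Xi * r^2) * (Xi^t * (u t)^2)"
        using c by (simp add: algebra_simps)
      then have "s^2 \<le> s^2 * (2 * (Xi^(t+1) * (u (t+1))^2) + 2 * (Xi * r^2) * (Xi^t * (u t)^2))"
        using mult_left_mono[of 1 _ "s^2"] by simp
      then show ?thesis unfolding f by (simp add: algebra_simps)
    qed
    have lim': "f \<longlonglongrightarrow> 0" using lim unfolding f_def by simp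
    have "(\<lambda>t. f (Suc t) + (Xi * r^2) * f t) \<longlonglongrightarrow> 0 + (Xi * r^2) * 0"
      by (intro tendsto_intros lim' LIMSEQ_Suc)
    then have "s^2/2 \<le> 0" using LIMSEQ_le_const[of _ 0 "s^2/2"] key by auto
    then show False using s by simp
  qed
qed

theorem proposition14:
  fixes n :: nat and \<sigma>2 :: "nat \<Rightarrow> real" and \<gamma> \<zeta> \<Delta> \<Xi> :: real
  assumes "n \<ge> 1"
    and "\<And>j. j < n \<Longrightarrow> \<sigma>2 j \<ge> 0"
    and "\<And>i j. i \<le> j \<Longrightarrow> j < n \<Longrightarrow> \<sigma>2 j \<le> \<sigma>2 i"
    and "\<gamma> > 0" and "0 < \<zeta>" and "\<zeta> < 1" and "0 \<le> \<Delta>" and "\<Delta> < 1"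
    and "malthusian_exponent n \<sigma>2 \<gamma> \<zeta> \<Delta> \<Xi>"
  shows "\<Xi> < 1 / lam2_max n \<sigma>2 \<gamma> \<zeta> \<Delta>"
proof -
  have X0: "\<Xi> > 0" and summ: "summable (\<lambda>t. \<Xi>^t * H2 n \<sigma>2 \<gamma> \<zeta> \<Delta> t)"
    and eq: "\<gamma>^2 * \<zeta> * (1 - \<zeta>) * (\<Sum>t. \<Xi>^t * H2 n \<sigma>2 \<gamma> \<zeta> \<Delta> t) = 1"
    and uniq: "\<And>x. x > 0 \<Longrightarrow> malthusian_eq n \<sigma>2 \<gamma> \<zeta> \<Delta> x \<Longrightarrow> x = \<Xi>"
  proof -
    have me: "\<Xi> > 0 \<and> malthusian_eq n \<sigma>2 \<gamma> \<zeta> \<Delta> \<Xi> \<and>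
     (\<forall>x>0. malthusian_eq n \<sigma>2 \<gamma> \<zeta> \<Delta> x \<longrightarrow> x = \<Xi>)"
      using assms(9) unfolding malthusian_exponent_def by blast
    then show "\<Xi> > 0" "summable (\<lambda>t. \<Xi>^t * H2 n \<sigma>2 \<gamma> \<zeta> \<Delta> t)"
      "\<gamma>^2 * \<zeta> * (1 - \<zeta>) * (\<Sum>t. \<Xi>^t * H2 n \<sigma>2 \<gamma> \<zeta> \<Delta> t) = 1"
      "\<And>x. x > 0 \<Longrightarrow> malthusian_eq n \<sigma>2 \<gamma> \<zeta> \<Delta> x \<Longrightarrow> x = \<Xi>"
      unfolding malthusian_eq_def by blast+
  qed
  define P where "P = {j. j < n \<and> \<sigma>2 j > 0}"
  define S where "S = {cmod (lam2 \<gamma> \<zeta> \<Delta> (\<sigma>2 j)) | j. j < n \<and> \<sigma>2 j > 0}"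
  have LS: "lam2_max n \<sigma>2 \<gamma> \<zeta> \<Delta> = Max S" unfolding lam2_max_def S_def by simp
  have Pne: "P \<noteq> {}"
  proof
    assume "P = {}"
    then have z: "\<sigma>2 j = 0" if "j < n" for j using assms(2)[OF that] that unfolding P_def
      by force
    have "H2 n \<sigma>2 \<gamma> \<zeta> \<Delta> t = 0" for t
      unfolding H2_def using z H2_term_zero_s by simp
    then show False using eq by simp
  qed
  have finS: "finite S" unfolding S_def by simp
  have Sne: "S \<noteq> {}" using Pne unfolding S_def P_def by blast
  obtain j0 where j0: "j0 < n" "\<sigma>2 j0 > 0" "cmod (lam2 \<gamma> \<zeta> \<Delta> (\<sigma>2 j0)) = Max S"
    using Max_in[OF finS Sne] unfolding S_def by auto
  have Sle: "cmod (lam2 \<gamma> \<zeta> \<Delta> (\<sigma>2 j)) \<le> Max S" if "j < n" "\<sigma>2 j > 0" for j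
    using Max_ge[OF finS] that unfolding S_def by blast
  have nn: "0 \<le> H2_term \<gamma> \<zeta> \<Delta> (\<sigma>2 j) t" for j t using H2_term_nonneg assms(7) by blast
  show ?thesis
  proof (cases "Max S = 0")
    case True
    have z: "H2_term \<gamma> \<zeta> \<Delta> (\<sigma>2 j) t = 0" if "j < n" "t \<ge> 1" for j t
    proof (cases "\<sigma>2 j > 0")
      case True
      then have "lam2 \<gamma> \<zeta> \<Delta> (\<sigma>2 j) = 0" using Sle[OF \<open>j < n\<close> True] \<open>Max S = 0\<close> by simp
      then show ?thesis using lam2_zero assms(7) that by blast
    next
      case False
      then have "\<sigma>2 j = 0" using assms(2)[OF \<open>j < n\<close>] by simp
      then show ?thesis using H2_term_zero_s by simp
    qed
    have Hz: "H2 n \<sigma>2 \<gamma> \<zeta> \<Delta> t = 0" if "t \<ge> 1" for t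
      unfolding H2_def using z that by simp
    have sums: "(\<lambda>t. x^t * H2 n \<sigma>2 \<gamma> \<zeta> \<Delta> t) sums H2 n \<sigma>2 \<gamma> \<zeta> \<Delta> 0" for x
    proof -
      have "(\<lambda>t. x^t * H2 n \<sigma>2 \<gamma> \<zeta> \<Delta> t) = (\<lambda>t. if t = 0 then (\<lambda>t. x^t * H2 n \<sigma>2 \<gamma> \<zeta> \<Delta> t) t else 0)"
        using Hz by (intro ext) (simp add: Suc_le_eq)
      then show ?thesis using sums_single[of 0 "\<lambda>t. x^t * H2 n \<sigma>2 \<gamma> \<zeta> \<Delta> t"] by simp
    qed
    have "malthusian_eq n \<sigma>2 \<gamma> \<zeta> \<Delta> (\<Xi> + 1)"
      using sums[of "\<Xi>+1"] sums[of \<Xi>] eq unfolding malthusian_eq_def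
      by (auto simp: sums_iff)
    then have "\<Xi> + 1 = \<Xi>" using uniq[of "\<Xi>+1"] X0 by linarith
    then show ?thesis by simp
  next
    case False
    have "0 \<le> Max S" using j0(3) norm_ge_zero by metis
    then have M0: "Max S > 0" using False by linarith
    show ?thesis
    proof (rule ccontr)
      assume "\<not> \<Xi> < 1 / lam2_max n \<sigma>2 \<gamma> \<zeta> \<Delta>"
      then have "1 / Max S \<le> \<Xi>" unfolding LS by simp
      then have "1 \<le> \<Xi> * Max S" using M0 by (simp add: divide_le_eq mult.commute)
      then have L1: "\<Xi> * cmod (lam2 \<gamma> \<zeta> \<Delta> (\<sigma>2 j0)) \<ge> 1" using j0(3) by simp
      have lim: "(\<lambda>t. \<Xi>^t * H2 n \<sigma>2 \<gamma> \<zeta> \<Delta> t) \<longlonglongrightarrow> 0"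
        using summ by (rule summable_LIMSEQ_zero)
      have npos: "real n > 0" using assms(1) by simp
      have up: "\<Xi>^t * H2_term \<gamma> \<zeta> \<Delta> (\<sigma>2 j0) t \<le> real n * (\<Xi>^t * H2 n \<sigma>2 \<gamma> \<zeta> \<Delta> t)" for t
      proof -
        have "H2_term \<gamma> \<zeta> \<Delta> (\<sigma>2 j0) t \<le> (\<Sum>j<n. H2_term \<gamma> \<zeta> \<Delta> (\<sigma>2 j) t)"
          by (rule member_le_sum) (use j0(1) nn in auto)
        also have "\<dots> = real n * H2 n \<sigma>2 \<gamma> \<zeta> \<Delta> t" unfolding H2_def using npos by simp
        finally have "H2_term \<gamma> \<zeta> \<Delta> (\<sigma>2 j0) t \<le> real n * H2 n \<sigma>2 \<gamma> \<zeta> \<Delta> t" .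
        then have "\<Xi>^t * H2_term \<gamma> \<zeta> \<Delta> (\<sigma>2 j0) t \<le> \<Xi>^t * (real n * H2 n \<sigma>2 \<gamma> \<zeta> \<Delta> t)"
          by (rule mult_left_mono) (use X0 in simp)
        then show ?thesis by (simp only: mult.left_commute)
      qed
      have "(\<lambda>t. real n * (\<Xi>^t * H2 n \<sigma>2 \<gamma> \<zeta> \<Delta> t)) \<longlonglongrightarrow> real n * 0"
        by (intro tendsto_intros lim)
      then have hlim: "(\<lambda>t. real n * (\<Xi>^t * H2 n \<sigma>2 \<gamma> \<zeta> \<Delta> t)) \<longlonglongrightarrow> 0" by simp
      have lo: "\<forall>\<^sub>F t in sequentially. (\<lambda>_. 0::real) t \<le> \<Xi>^t * H2_term \<gamma> \<zeta> \<Delta> (\<sigma>2 j0) t"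
        by (rule always_eventually) (use nn X0 in simp)
      have hi: "\<forall>\<^sub>F t in sequentially. \<Xi>^t * H2_term \<gamma> \<zeta> \<Delta> (\<sigma>2 j0) t \<le> real n * (\<Xi>^t * H2 n \<sigma>2 \<gamma> \<zeta> \<Delta> t)"
        by (rule always_eventually) (use up in blast)
      have "(\<lambda>t. \<Xi>^t * H2_term \<gamma> \<zeta> \<Delta> (\<sigma>2 j0) t) \<longlonglongrightarrow> 0"
        by (rule tendsto_sandwich[OF lo hi tendsto_const hlim])
      then show False using no_tendsto[OF assms(7) j0(2) X0 L1] by simp
    qed
  qed
qed

end
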